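(* Let $(N_r)_{r\in\mathbb{Z}}$ be the Narayana sequence, let $a,b,r$ be integers with $1\le b\le a$ and $m=ar+b>a$. Then for every integer $s\ge 0$ there exist integers $\alpha,\beta,\gamma$ such that $$N_{ar+b}=\alpha N_{a(s+2)+b}+\beta N_{a(s+1)+b}+\gamma N_{as+b};$$ in particular (taking $s=0$) $N_m$ is an integer linear combination of $N_{2a+b}$, $N_{a+b}$ and $N_b$.
   Context: The Narayana sequence $(N_r)_{r\in\mathbb{Z}}$ is defined by $N_0=0$, $N_1=N_2=1$ and $N_r=N_{r-1}+N_{r-3}$ for all integers $r$ (extended to negative indices via $N_{r-3}=N_r-N_{r-1}$). The numbers $N_b, N_{a+b}, N_{2a+b},\dots$ are the entries of the $b$-th column of the table whose rows are $(N_{ka+1},\dots,N_{ka+a})$, $k=0,1,2,\dots$; the claim says $N_{ar+b}$ is an integer combination of any three consecutive entries of this column. *)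

theory Defs
  imports Main
begin

fun nar_pos :: "nat \<Rightarrow> int" where
  "nar_pos 0 = 0"
| "nar_pos (Suc 0) = 1"
| "nar_pos (Suc (Suc 0)) = 1"
| "nar_pos (Suc (Suc (Suc n))) = nar_pos (Suc (Suc n)) + nar_pos n"

text \<open>nar_neg n is N at index -n, via N(r-3) = N(r) - N(r-1).\<close>
fun nar_neg :: "nat \<Rightarrow> int" where
  "nar_neg 0 = 0"
| "nar_neg (Suc 0) = 0"
| "nar_neg (Suc (Suc 0)) = 1"
| "nar_neg (Suc (Suc (Suc n))) = nar_neg n - nar_neg (Suc n)"

definition narayana :: "int \<Rightarrow> int" where
  "narayana r = (if r \<ge> 0 then nar_pos (nat r) else nar_neg (nat (- r)))"

end

theory Submission
  imports Defs
begin

lemma nar_rec: "narayana (n + 3) = narayana (n + 2) + narayana n"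
proof (cases "n \<ge> 0")
  case True
  then obtain m where m: "n = int m" by (metis nonneg_eq_int)
  have "nar_pos (Suc (Suc (Suc m))) = nar_pos (Suc (Suc m)) + nar_pos m" by simp
  moreover have "nat (int m + 3) = Suc (Suc (Suc m))" "nat (int m + 2) = Suc (Suc m)" by auto
  ultimately show ?thesis using m by (simp add: narayana_def)
next
  case False
  then consider "n = -1" | "n = -2" | m where "n = - int m - 3" 
  proof -
    have "n = -1 \<or> n = -2 \<or> n = - int (nat (-n-3)) - 3" using False by auto
    thus ?thesis using that by blast
  qed
  then show ?thesis
  proof cases
    case 1 then show ?thesis by (simp add: narayana_def numeral_eq_Suc)
  next
    case 2 then show ?thesis by (simp add: narayana_def numeral_eq_Suc)
  next
    case 3
    have "nar_neg (Suc (Suc (Suc m))) = nar_neg m - nar_neg (Suc m)" by simp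
    moreover have "nat (- (- int m - 3)) = Suc (Suc (Suc m))" "nat (-(- int m - 3 + 2)) = Suc m"
       "nat (-(- int m - 3 + 3)) = m" by auto
    moreover have "\<not> (- int m - 3 \<ge> 0)" "\<not> (- int m - 3 + 2 \<ge> 0)" by auto
    moreover have "- int m - 3 + 3 \<ge> 0 \<longleftrightarrow> m = 0" by auto
    ultimately show ?thesis using 3 by (cases m) (auto simp: narayana_def numeral_eq_Suc)
  qed
qed

datatype m3 = M int int int int int int int int int

fun app :: "m3 \<Rightarrow> int \<times> int \<times> int \<Rightarrow> int \<times> int \<times> int" where
  "app (M a b c d e f g h i) (x, y, z) = (a*x+b*y+c*z, d*x+e*y+f*z, g*x+h*y+i*z)"

fun det3 :: "m3 \<Rightarrow> int" where
  "det3 (M a b c d e f g h i) = a*(e*i - f*h) - b*(d*i - f*g) + c*(d*h - e*g)"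

fun tr3 :: "m3 \<Rightarrow> int" where
  "tr3 (M a b c d e f g h i) = a + e + i"

fun cc3 :: "m3 \<Rightarrow> int" where
  "cc3 (M a b c d e f g h i) = a*e - b*d + a*i - c*g + e*i - f*h"

fun mulA :: "m3 \<Rightarrow> m3" where
  "mulA (M a b c d e f g h i) = M d e f g h i (a+g) (b+h) (c+i)"

definition u :: "int \<Rightarrow> int \<times> int \<times> int" where
  "u n = (narayana n, narayana (n+1), narayana (n+2))"

lemma u_step: "u (n + 1) = (case u n of (x, y, z) \<Rightarrow> (y, z, x + z))"
  using nar_rec[of n] by (simp add: u_def add.assoc)

lemma app_mulA: "app (mulA B) v = (case app B v of (x, y, z) \<Rightarrow> (y, z, x + z))"
  by (cases B; cases v) (auto simp: algebra_simps)

lemma det_mulA: "det3 (mulA B) = det3 B"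
  by (cases B) (simp add: algebra_simps)

lemma CH: "fst (app B (app B (app B v))) =
   tr3 B * fst (app B (app B v)) - cc3 B * fst (app B v) + det3 B * fst v"
  by (cases B; cases v) (simp add: algebra_simps)

lemma exB: "\<exists>B. det3 B = 1 \<and> (\<forall>n. u (n + int a) = app B (u n))"
proof (induction a)
  case 0
  show ?case
    by (rule exI[of _ "M 1 0 0 0 1 0 0 0 1"]) (auto simp: u_def)
next
  case (Suc a)
  then obtain B where B: "det3 B = 1" "\<forall>n. u (n + int a) = app B (u n)" by blast
  show ?case
  proof (rule exI[of _ "mulA B"], intro conjI allI)
    show "det3 (mulA B) = 1" using B by (simp add: det_mulA)
    fix n
    have "n + int (Suc a) = n + int a + 1" by simp
    hence "u (n + int (Suc a)) = u (n + int a + 1)" by (simp only:)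
    also have "\<dots> = app (mulA B) (u n)" using B by (simp add: u_step app_mulA)
    finally show "u (n + int (Suc a)) = app (mulA B) (u n)" .
  qed
qed

lemma span_lemma:
  fixes h :: "int \<Rightarrow> int"
  assumes rec: "\<And>k. h (k + 3) = t * h (k + 2) - c * h (k + 1) + h k"
  shows "\<exists>\<alpha> \<beta> \<gamma>. h r = \<alpha> * h (s + 2) + \<beta> * h (s + 1) + \<gamma> * h s"
proof -
  define P where "P = (\<lambda>r. \<exists>\<alpha> \<beta> \<gamma>. h r = \<alpha> * h (s + 2) + \<beta> * h (s + 1) + \<gamma> * h s)"
  define Q where "Q = (\<lambda>j. P (s + j) \<and> P (s + j + 1) \<and> P (s + j + 2))"
  have "Q j" for j
  proof (induction j rule: int_induct[where k = 0])
    case base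
    show ?case unfolding Q_def P_def
      apply (intro conjI)
        apply (rule exI[of _ 0], rule exI[of _ 0], rule exI[of _ 1], simp)
       apply (rule exI[of _ 0], rule exI[of _ 1], rule exI[of _ 0], simp add: add.commute)
      apply (rule exI[of _ 1], rule exI[of _ 0], rule exI[of _ 0], simp add: add.commute)
      done
  next
    case (step1 i)
    then obtain a1 b1 c1 a2 b2 c2 a3 b3 c3 where
      e: "h (s+i) = a1 * h (s + 2) + b1 * h (s + 1) + c1 * h s"
         "h (s+i+1) = a2 * h (s + 2) + b2 * h (s + 1) + c2 * h s"
         "h (s+i+2) = a3 * h (s + 2) + b3 * h (s + 1) + c3 * h s"
      unfolding Q_def P_def by blast
    have "h (s+i+3) = t * h (s+i+2) - c * h (s+i+1) + h (s+i)" using rec[of "s+i"] by (simp add: add.assoc)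
    hence "h (s+(i+1)+2) = (t*a3 - c*a2 + a1) * h (s + 2) + (t*b3 - c*b2 + b1) * h (s + 1)
            + (t*c3 - c*c2 + c1) * h s"
      using e by (simp add: add.assoc algebra_simps)
    thus ?case using step1 e unfolding Q_def P_def
      by (auto simp: add.assoc intro!: exI)
  next
    case (step2 i)
    then obtain a1 b1 c1 a2 b2 c2 a3 b3 c3 where
      e: "h (s+i) = a1 * h (s + 2) + b1 * h (s + 1) + c1 * h s"
         "h (s+i+1) = a2 * h (s + 2) + b2 * h (s + 1) + c2 * h s"
         "h (s+i+2) = a3 * h (s + 2) + b3 * h (s + 1) + c3 * h s"
      unfolding Q_def P_def by blast
    have "h (s+(i-1)+3) = t * h (s+(i-1)+2) - c * h (s+(i-1)+1) + h (s+(i-1))" using rec[of "s+(i-1)"] by simp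
    hence "h (s+(i-1)) = h (s+i+2) - t * h (s+i+1) + c * h (s+i)" by (simp add: algebra_simps)
    hence "h (s+(i-1)) = (a3 - t*a2 + c*a1) * h (s + 2) + (b3 - t*b2 + c*b1) * h (s + 1)
            + (c3 - t*c2 + c*c1) * h s"
      using e by (simp add: algebra_simps)
    hence "P (s+(i-1))" unfolding P_def by blast
    moreover have "s+(i-1)+1 = s+i" "s+(i-1)+2 = s+i+1" by simp_all
    ultimately show ?case using step2(2) unfolding Q_def by (simp only:)
  qed
  from this[of "r - s"] show ?thesis unfolding Q_def P_def by simp
qed

theorem theorem5:
  fixes a b r :: int
  assumes "1 \<le> b" and "b \<le> a" and "a * r + b > a"
  shows "\<forall>s::int. s \<ge> 0 \<longrightarrow>
           (\<exists>\<alpha> \<beta> \<gamma> :: int. narayana (a * r + b) =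
              \<alpha> * narayana (a * (s + 2) + b) + \<beta> * narayana (a * (s + 1) + b)
              + \<gamma> * narayana (a * s + b))"
proof (intro allI impI)
  fix s :: int
  obtain B where B: "det3 B = 1" "\<forall>n. u (n + int (nat a)) = app B (u n)" using exB by blast
  have Ba: "u (n + a) = app B (u n)" for n using B assms by simp
  define h where "h k = narayana (a * k + b)" for k
  have hu: "h k = fst (u (a * k + b))" for k by (simp add: h_def u_def)
  have uk: "u (a * (k + 1) + b) = app B (u (a * k + b))" for k
    using Ba[of "a*k+b"] by (simp add: algebra_simps)
  have "h (k + 3) = tr3 B * h (k + 2) - cc3 B * h (k + 1) + h k" for k
  proof -
    have "u (a * (k+3) + b) = app B (app B (app B (u (a*k+b))))"
      using uk[of "k+2"] uk[of "k+1"] uk[of k] by (simp add: add.assoc)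
    moreover have "u (a * (k+2) + b) = app B (app B (u (a*k+b)))"
      using uk[of "k+1"] uk[of k] by (simp add: add.assoc)
    ultimately show ?thesis using CH[of B "u (a*k+b)"] uk[of k] B(1) by (simp add: hu)
  qed
  from span_lemma[OF this, of r s] show "\<exists>\<alpha> \<beta> \<gamma> :: int. narayana (a * r + b) =
              \<alpha> * narayana (a * (s + 2) + b) + \<beta> * narayana (a * (s + 1) + b)
              + \<gamma> * narayana (a * s + b)" by (simp add: h_def)
qed

end
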